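(* Let $T$ be a Steiner-closed search tree of a tree $G$, and let $\Pi=p_0,p_1,\dots,p_j$ be the path in $T$ from the root $p_0$ to a node $p_j$. For any $i\in\{1,\dots,j\}$, let $\Pi'=\{p_i,\dots,p_j\}$. Then removing the vertices of $\mathrm{CH}(\Pi')$ from $\mathrm{CH}(\Pi)$ leaves a graph with at most $2$ connected components.
   Context: Search tree on a tree: a rooted tree $T$ is a valid search tree on an unrooted tree $G$ if the root $r$ of $T$ is a vertex of $G$ and the subtrees of $T\setminus r$ are valid search trees on the connected components of $G\setminus r$. For vertices $a,b$ of $G$, $P(a,b)$ is the vertex set of the path from $a$ to $b$ in $G$. Convex hull: for $S\subseteq V(G)$, $\mathrm{CH}(S)$ is the subgraph of $G$ induced by $\bigcup_{a,b\in S}P(a,b)$. A set $S$ is Steiner-closed (with respect to $G$) if every vertex of $\mathrm{CH}(S)\setminus S$ has degree exactly $2$ in $\mathrm{CH}(S)$. A search tree $T$ of $G$ is Steiner-closed if for every node $v$ of $T$, the set of nodes on the path in $T$ from the root to $v$ is a Steiner-closed set with respect to $G$. *)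

theory Defs
  imports Main
begin

definition is_path :: "('a \<Rightarrow> 'a \<Rightarrow> bool) \<Rightarrow> 'a list \<Rightarrow> bool" where
  "is_path E ps \<longleftrightarrow> ps \<noteq> [] \<and> distinct ps \<and>
     (\<forall>i. Suc i < length ps \<longrightarrow> E (ps ! i) (ps ! Suc i))"

definition is_tree :: "'a set \<Rightarrow> ('a \<Rightarrow> 'a \<Rightarrow> bool) \<Rightarrow> bool" where
  "is_tree V E \<longleftrightarrow> finite V \<and> V \<noteq> {} \<and>
     (\<forall>u v. E u v \<longrightarrow> u \<in> V \<and> v \<in> V \<and> E v u \<and> u \<noteq> v) \<and>
     (\<forall>a\<in>V. \<forall>b\<in>V. \<exists>!ps. is_path E ps \<and> hd ps = a \<and> last ps = b)"

definition path_verts :: "('a \<Rightarrow> 'a \<Rightarrow> bool) \<Rightarrow> 'a \<Rightarrow> 'a \<Rightarrow> 'a set" where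
  "path_verts E a b = {v. \<exists>ps. is_path E ps \<and> hd ps = a \<and> last ps = b \<and> v \<in> set ps}"

text \<open>Vertex set of the convex hull CH(S) (the hull is the subgraph induced by it).\<close>
definition hull_verts :: "('a \<Rightarrow> 'a \<Rightarrow> bool) \<Rightarrow> 'a set \<Rightarrow> 'a set" where
  "hull_verts E S = (\<Union>a\<in>S. \<Union>b\<in>S. path_verts E a b)"

definition steiner_closed :: "('a \<Rightarrow> 'a \<Rightarrow> bool) \<Rightarrow> 'a set \<Rightarrow> bool" where
  "steiner_closed E S \<longleftrightarrow>
     (\<forall>v \<in> hull_verts E S - S. card {u \<in> hull_verts E S. E v u} = 2)"

definition connected_set :: "('a \<Rightarrow> 'a \<Rightarrow> bool) \<Rightarrow> 'a set \<Rightarrow> bool" where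
  "connected_set E C \<longleftrightarrow>
     (\<forall>a\<in>C. \<forall>b\<in>C. \<exists>ps. is_path E ps \<and> hd ps = a \<and> last ps = b \<and> set ps \<subseteq> C)"

definition components :: "('a \<Rightarrow> 'a \<Rightarrow> bool) \<Rightarrow> 'a set \<Rightarrow> 'a set set" where
  "components E S = {C. C \<subseteq> S \<and> C \<noteq> {} \<and> connected_set E C \<and>
       (\<forall>u\<in>C. \<forall>v\<in>S - C. \<not> E u v)}"

datatype 'a rtree = Node 'a "'a rtree list"

inductive search_tree :: "('a \<Rightarrow> 'a \<Rightarrow> bool) \<Rightarrow> 'a set \<Rightarrow> 'a rtree \<Rightarrow> bool"
  for E where
  "r \<in> S \<Longrightarrow> distinct cs \<Longrightarrow> set cs = components E (S - {r}) \<Longrightarrow>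
   length ts = length cs \<Longrightarrow> (\<forall>i < length ts. search_tree E (cs ! i) (ts ! i)) \<Longrightarrow>
   search_tree E S (Node r ts)"

inductive root_path :: "'a rtree \<Rightarrow> 'a list \<Rightarrow> bool" where
  "root_path (Node r ts) [r]"
| "t \<in> set ts \<Longrightarrow> root_path t p \<Longrightarrow> root_path (Node r ts) (r # p)"

definition steiner_closed_tree :: "('a \<Rightarrow> 'a \<Rightarrow> bool) \<Rightarrow> 'a rtree \<Rightarrow> bool" where
  "steiner_closed_tree E T \<longleftrightarrow> (\<forall>p. root_path T p \<longrightarrow> steiner_closed E (set p))"

end

theory Submission imports Defs begin

fun walk :: "('a \<Rightarrow> 'a \<Rightarrow> bool) \<Rightarrow> 'a list \<Rightarrow> bool" where
  "walk E [] = True"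
| "walk E [x] = True"
| "walk E (x # y # zs) = (E x y \<and> walk E (y # zs))"

lemma walk_iff: "walk E ps \<longleftrightarrow> (\<forall>i. Suc i < length ps \<longrightarrow> E (ps ! i) (ps ! Suc i))"
proof (induction E ps rule: walk.induct)
  case (3 E x y zs)
  show ?case
  proof
    assume "walk E (x # y # zs)"
    then show "\<forall>i. Suc i < length (x # y # zs) \<longrightarrow> E ((x # y # zs) ! i) ((x # y # zs) ! Suc i)"
      using 3 by (auto simp: nth_Cons split: nat.splits)
  next
    assume H: "\<forall>i. Suc i < length (x # y # zs) \<longrightarrow> E ((x # y # zs) ! i) ((x # y # zs) ! Suc i)"
    have "E x y" using H[rule_format, of 0] by simp
    moreover have "\<forall>i. Suc i < length (y # zs) \<longrightarrow> E ((y # zs) ! i) ((y # zs) ! Suc i)"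
      using H by (metis Suc_less_eq length_Cons nth_Cons_Suc)
    ultimately show "walk E (x # y # zs)" using 3 by simp
  qed
qed auto

lemma is_path_walk: "is_path E ps \<longleftrightarrow> ps \<noteq> [] \<and> distinct ps \<and> walk E ps"
  by (simp add: is_path_def walk_iff)

lemma walk_append: "xs \<noteq> [] \<Longrightarrow> ys \<noteq> [] \<Longrightarrow>
   walk E (xs @ ys) \<longleftrightarrow> walk E xs \<and> walk E ys \<and> E (last xs) (hd ys)"
proof (induction E xs rule: walk.induct)
  case (2 E x)
  then show ?case by (cases ys) auto
qed auto

lemma walk_Cons: "walk E (x # ys) \<Longrightarrow> walk E ys"
  by (cases ys) auto

lemma walk_to_path: "walk E ws \<Longrightarrow> ws \<noteq> [] \<Longrightarrow>
  \<exists>ps. is_path E ps \<and> hd ps = hd ws \<and> last ps = last ws \<and> set ps \<subseteq> set ws"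
proof (induction "length ws" arbitrary: ws rule: less_induct)
  case less
  show ?case
  proof (cases "distinct ws")
    case True
    then show ?thesis using less.prems by (auto simp: is_path_walk)
  next
    case False
    then obtain xs y ys zs where ws: "ws = xs @ [y] @ ys @ [y] @ zs"
      using not_distinct_decomp by blast
    let ?w = "xs @ [y] @ zs"
    have w1: "walk E ?w"
    proof -
      have a: "walk E (xs @ [y])"
        using less.prems(1) ws walk_append[of "xs @ [y]" "ys @ [y] @ zs" E] by simp
      have b: "walk E ([y] @ zs)"
        using less.prems(1) ws walk_append[of "xs @ [y] @ ys" "[y] @ zs" E] by simp
      show ?thesis using a b walk_append[of "xs @ [y]" zs E]
        by (cases zs) auto
    qed
    have "length ?w < length ws" using ws by simp
    then obtain ps where ps: "is_path E ps \<and> hd ps = hd ?w \<and> last ps = last ?w \<and> set ps \<subseteq> set ?w"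
      using less.hyps w1 by blast
    have "hd ?w = hd ws" "last ?w = last ws" "set ?w \<subseteq> set ws"
      using ws by (cases xs; cases zs; auto)+
    then show ?thesis using ps by (intro exI[of _ ps]) auto
  qed
qed

lemma slice_path:
  assumes "is_path E ps" "m \<le> n" "n < length ps"
  shows "is_path E (take (Suc n - m) (drop m ps))"
    "hd (take (Suc n - m) (drop m ps)) = ps ! m"
    "last (take (Suc n - m) (drop m ps)) = ps ! n"
    "set (take (Suc n - m) (drop m ps)) = (\<lambda>j. ps ! j) ` {m..n}"
proof -
  let ?s = "take (Suc n - m) (drop m ps)"
  have len: "length ?s = Suc n - m" using assms by simp
  have nth: "\<And>j. j < Suc n - m \<Longrightarrow> ?s ! j = ps ! (m + j)" using assms by simp
  show "is_path E ?s" using assms unfolding is_path_def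
    by (auto simp: len nth)
  show "hd ?s = ps ! m" using assms by (simp add: hd_conv_nth hd_drop_conv_nth)
  show "last ?s = ps ! n" using assms
    by (metis One_nat_def Suc_diff_le add_diff_cancel_left' diff_Suc_1 diff_less last_conv_nth len less_nat_zero_code list.size(3) nth zero_less_Suc le_add_diff_inverse)
  show "set ?s = (\<lambda>j. ps ! j) ` {m..n}"
  proof
    show "set ?s \<subseteq> (\<lambda>j. ps ! j) ` {m..n}"
      by (auto simp: in_set_conv_nth len nth)
    show "(\<lambda>j. ps ! j) ` {m..n} \<subseteq> set ?s"
    proof
      fix v assume "v \<in> (\<lambda>j. ps ! j) ` {m..n}"
      then obtain j where j: "m \<le> j" "j \<le> n" "v = ps ! j" by auto
      have "?s ! (j - m) = v" using j nth[of "j - m"] by simp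
      moreover have "j - m < length ?s" using j len by simp
      ultimately show "v \<in> set ?s" by (metis nth_mem)
    qed
  qed
qed

lemma walk_rev: "(\<And>u v. E u v \<Longrightarrow> E v u) \<Longrightarrow> walk E ps \<Longrightarrow> walk E (rev ps)"
proof (induction E ps rule: walk.induct)
  case (3 E x y zs)
  then have "walk E (rev (y # zs))" "E y x" by auto
  then show ?case using walk_append[of "rev (y # zs)" "[x]" E] by simp
qed auto

lemma walk_take: "walk E ps \<Longrightarrow> walk E (take n ps)"
  by (simp add: walk_iff)

lemma walk_drop: "walk E ps \<Longrightarrow> walk E (drop n ps)"
  by (simp add: walk_iff)

lemma is_path_rev: "(\<And>u v. E u v \<Longrightarrow> E v u) \<Longrightarrow> is_path E ps \<Longrightarrow> is_path E (rev ps)"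
  by (simp add: is_path_walk walk_rev)

context
  fixes V :: "'a set" and E :: "'a \<Rightarrow> 'a \<Rightarrow> bool"
  assumes tree: "is_tree V E"
begin

lemma Esym: "E u v \<Longrightarrow> E v u" and EV1: "E u v \<Longrightarrow> u \<in> V" and EV2: "E u v \<Longrightarrow> v \<in> V"
  using tree unfolding is_tree_def by blast+

lemma finV: "finite V" using tree unfolding is_tree_def by blast

lemma walk_V: "walk E ps \<Longrightarrow> ps \<noteq> [] \<Longrightarrow> hd ps \<in> V \<Longrightarrow> set ps \<subseteq> V"
proof (induction ps)
  case (Cons x xs) then show ?case by (cases xs) (auto dest: EV2)
qed simp

lemma path_V: "is_path E ps \<Longrightarrow> hd ps \<in> V \<Longrightarrow> set ps \<subseteq> V"
  using walk_V by (simp add: is_path_walk)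

lemma path_exists: "a \<in> V \<Longrightarrow> b \<in> V \<Longrightarrow> \<exists>ps. is_path E ps \<and> hd ps = a \<and> last ps = b"
  using tree unfolding is_tree_def by blast

lemma path_unique: "a \<in> V \<Longrightarrow> is_path E ps \<Longrightarrow> is_path E qs \<Longrightarrow> hd ps = a \<Longrightarrow> hd qs = a
   \<Longrightarrow> last ps = last qs \<Longrightarrow> ps = qs"
proof -
  assume a: "a \<in> V" "is_path E ps" "is_path E qs" "hd ps = a" "hd qs = a" "last ps = last qs"
  have "last ps \<in> V" using path_V[OF a(2)] a by (metis is_path_def last_in_set subsetD)
  then show ?thesis using tree a unfolding is_tree_def by metis
qed

lemma path_verts_eq: "is_path E ps \<Longrightarrow> hd ps \<in> V \<Longrightarrow> path_verts E (hd ps) (last ps) = set ps"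
  unfolding path_verts_def using path_unique by blast

lemma path_verts_sym: "path_verts E a b = path_verts E b a"
proof -
  have "path_verts E a b \<subseteq> path_verts E b a" for a b
  proof
    fix v assume "v \<in> path_verts E a b"
    then obtain ps where ps: "is_path E ps" "hd ps = a" "last ps = b" "v \<in> set ps"
      unfolding path_verts_def by blast
    have "is_path E (rev ps)" using ps Esym is_path_rev by blast
    moreover have "hd (rev ps) = b" "last (rev ps) = a" using ps by (auto simp: hd_rev last_rev)
    ultimately show "v \<in> path_verts E b a" using ps unfolding path_verts_def by auto
  qed
  then show ?thesis by blast
qed

lemma get_path: assumes "a \<in> V" "b \<in> V"
  obtains ps where "is_path E ps" "hd ps = a" "last ps = b" "path_verts E a b = set ps"
  using path_exists[OF assms] path_verts_eq assms by metis

lemma path_verts_V: "a \<in> V \<Longrightarrow> b \<in> V \<Longrightarrow> path_verts E a b \<subseteq> V"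
  by (metis get_path path_V)

lemma path_verts_ends: "a \<in> V \<Longrightarrow> b \<in> V \<Longrightarrow> a \<in> path_verts E a b \<and> b \<in> path_verts E a b"
  by (metis get_path hd_in_set last_in_set is_path_def)

lemma path_verts_refl: "a \<in> V \<Longrightarrow> path_verts E a a = {a}"
  using path_verts_eq[of "[a]"] by (simp add: is_path_def)

lemma path_tri: assumes "x \<in> V" "y \<in> V" "z \<in> V"
  shows "path_verts E x z \<subseteq> path_verts E x y \<union> path_verts E y z"
proof -
  obtain p1 where p1: "is_path E p1" "hd p1 = x" "last p1 = y" "path_verts E x y = set p1"
    using get_path assms by metis
  obtain p2 where p2: "is_path E p2" "hd p2 = y" "last p2 = z" "path_verts E y z = set p2"
    using get_path assms by metis
  let ?w = "p1 @ tl p2"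
  have p2c: "p2 = y # tl p2" using p2 by (metis is_path_def list.collapse)
  have w: "walk E ?w"
  proof (cases "tl p2 = []")
    case True then show ?thesis using p1 by (simp add: is_path_walk)
  next
    case False
    have "walk E (y # tl p2)" using p2 p2c by (metis is_path_walk)
    then have "walk E (tl p2)" "E y (hd (tl p2))" using False
      by (auto intro: walk_Cons) (metis False list.collapse walk.simps(3))
    then show ?thesis using walk_append[of p1 "tl p2" E] p1 False by (simp add: is_path_walk)
  qed
  have wne: "?w \<noteq> []" using p1 by (simp add: is_path_def)
  obtain ps where ps: "is_path E ps" "hd ps = hd ?w" "last ps = last ?w" "set ps \<subseteq> set ?w"
    using walk_to_path[OF w wne] by blast
  have "hd ps = x" using ps p1 by (simp add: is_path_def)
  moreover have "last ps = z" using ps p1 p2 p2c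
    by (cases "tl p2 = []") (auto simp: is_path_def, metis last_ConsR last_ConsL)
  moreover have "set ?w \<subseteq> set p1 \<union> set p2" by (auto intro: list.set_sel(2))
  ultimately show ?thesis using path_verts_eq[OF ps(1)] ps p1 p2 assms by auto
qed

lemma path_verts_slice: assumes "is_path E ps" "hd ps \<in> V" "m \<le> n" "n < length ps"
  shows "path_verts E (ps ! m) (ps ! n) = (\<lambda>j. ps ! j) ` {m..n}"
proof -
  have "ps ! m \<in> V" using path_V[OF assms(1,2)] assms by auto
  then show ?thesis using path_verts_eq[OF slice_path(1)[OF assms(1,3,4)]] slice_path[OF assms(1,3,4)]
    by simp
qed

lemma between: assumes "a \<in> V" "b \<in> V" "c \<in> path_verts E a b" "y \<in> path_verts E a c"
  "z \<in> path_verts E c b" shows "c \<in> path_verts E y z"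
proof -
  obtain ps where ps: "is_path E ps" "hd ps = a" "last ps = b" "path_verts E a b = set ps"
    using get_path assms by metis
  have ne: "ps \<noteq> []" using ps by (simp add: is_path_def)
  obtain k where k: "k < length ps" "ps ! k = c" using assms ps by (metis in_set_conv_nth)
  have a0: "ps ! 0 = a" using ps ne by (simp add: hd_conv_nth)
  have bl: "ps ! (length ps - 1) = b" using ps ne by (simp add: last_conv_nth)
  have "path_verts E a c = (\<lambda>j. ps ! j) ` {0..k}"
    using path_verts_slice[OF ps(1) _ _ k(1), of 0] ps assms a0 k by simp
  then obtain m where m: "m \<le> k" "ps ! m = y" using assms by auto
  have "path_verts E c b = (\<lambda>j. ps ! j) ` {k..length ps - 1}"
    using path_verts_slice[OF ps(1) _ _, of k "length ps - 1"] ps assms bl k by simp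
  then obtain n where n: "k \<le> n" "n \<le> length ps - 1" "ps ! n = z" using assms by auto
  have "path_verts E y z = (\<lambda>j. ps ! j) ` {m..n}"
    using path_verts_slice[OF ps(1) _ _, of m n] ps assms m n k by simp
  then show ?thesis using m n k by auto
qed

lemma subpath: assumes "a \<in> V" "b \<in> V" "u \<in> path_verts E a b"
  shows "path_verts E a u \<subseteq> path_verts E a b"
proof -
  obtain ps where ps: "is_path E ps" "hd ps = a" "last ps = b" "path_verts E a b = set ps"
    using get_path assms by metis
  have ne: "ps \<noteq> []" using ps by (simp add: is_path_def)
  obtain k where k: "k < length ps" "ps ! k = u" using assms ps by (metis in_set_conv_nth)
  have a0: "ps ! 0 = a" using ps ne by (simp add: hd_conv_nth)
  have "path_verts E a u = (\<lambda>j. ps ! j) ` {0..k}"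
    using path_verts_slice[OF ps(1) _ _ k(1), of 0] ps assms a0 k by simp
  then show ?thesis using ps k by auto
qed

lemma in_hull: "a \<in> S \<Longrightarrow> b \<in> S \<Longrightarrow> path_verts E a b \<subseteq> hull_verts E S"
  unfolding hull_verts_def by blast

lemma self_in_hull: "S \<subseteq> V \<Longrightarrow> S \<subseteq> hull_verts E S"
  using in_hull path_verts_refl by blast

lemma hull_V: "S \<subseteq> V \<Longrightarrow> hull_verts E S \<subseteq> V"
  unfolding hull_verts_def using path_verts_V by blast

lemma hull_convex: assumes "S \<subseteq> V" "u \<in> hull_verts E S" "v \<in> hull_verts E S"
  shows "path_verts E u v \<subseteq> hull_verts E S"
proof -
  obtain a b where ab: "a \<in> S" "b \<in> S" "u \<in> path_verts E a b" using assms(2) unfolding hull_verts_def by blast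
  obtain c d where cd: "c \<in> S" "d \<in> S" "v \<in> path_verts E c d" using assms(3) unfolding hull_verts_def by blast
  have V: "a \<in> V" "b \<in> V" "c \<in> V" "d \<in> V" "u \<in> V" "v \<in> V"
    using ab cd assms hull_V by blast+
  have "path_verts E u v \<subseteq> path_verts E u a \<union> path_verts E a v" using path_tri V by blast
  also have "\<dots> \<subseteq> path_verts E u a \<union> path_verts E a c \<union> path_verts E c v" using path_tri V by blast
  also have "path_verts E u a \<subseteq> hull_verts E S"
    using subpath[of a b u] V ab path_verts_sym in_hull by blast
  moreover have "path_verts E c v \<subseteq> hull_verts E S"
    using subpath[of c d v] V cd in_hull by blast
  moreover have "path_verts E a c \<subseteq> hull_verts E S" using in_hull ab cd by blast
  ultimately show ?thesis by blast
qed

lemma connected_convex: assumes "R \<subseteq> V" "connected_set E R" "a \<in> R" "b \<in> R"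
  shows "path_verts E a b \<subseteq> R"
proof -
  obtain ps where "is_path E ps" "hd ps = a" "last ps = b" "set ps \<subseteq> R"
    using assms unfolding connected_set_def by blast
  then show ?thesis using path_verts_eq assms by blast
qed

lemma median:
  assumes V: "q1 \<in> V" "q2 \<in> V" "q3 \<in> V" and nB: "q1 \<notin> B" "q2 \<notin> B" "q3 \<notin> B"
    and conv: "\<And>u v. u \<in> B \<Longrightarrow> v \<in> B \<Longrightarrow> path_verts E u v \<subseteq> B"
    and m12: "path_verts E q1 q2 \<inter> B \<noteq> {}" and m23: "path_verts E q2 q3 \<inter> B \<noteq> {}"
    and m31: "path_verts E q3 q1 \<inter> B \<noteq> {}"
  shows "\<exists>x\<in>B. \<exists>u1 u2 u3. u1 \<noteq> u2 \<and> u1 \<noteq> u3 \<and> u2 \<noteq> u3 \<and> E x u1 \<and> E x u2 \<and> E x u3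
     \<and> x \<in> path_verts E q1 q2 \<and> {u1, u2, u3} \<subseteq> path_verts E q1 q2 \<union> path_verts E q3 q1"
proof -
  obtain ps where ps: "is_path E ps" "hd ps = q1" "last ps = q2" "path_verts E q1 q2 = set ps"
    using get_path V by metis
  obtain qs where qs: "is_path E qs" "hd qs = q3" "last qs = q1" "path_verts E q3 q1 = set qs"
    using get_path V by metis
  have psne: "ps \<noteq> []" and qsne: "qs \<noteq> []" using ps qs by (auto simp: is_path_def)
  have ex: "qs ! (length qs - 1) \<in> set ps" using qs ps qsne psne
    by (metis hd_in_set last_conv_nth)
  define k where "k = (LEAST k. qs ! k \<in> set ps)"
  have kx: "qs ! k \<in> set ps" unfolding k_def using ex by (rule LeastI)
  have kmin: "\<And>j. j < k \<Longrightarrow> qs ! j \<notin> set ps" unfolding k_def using not_less_Least by blast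
  have klen: "k < length qs" using Least_le[of "\<lambda>k. qs ! k \<in> set ps", OF ex] qsne unfolding k_def[symmetric]
    by (cases qs) auto
  define x where "x = qs ! k"
  obtain m where m: "m < length ps" "ps ! m = x" using kx unfolding x_def by (metis in_set_conv_nth)
  have xV: "x \<in> V" using ps path_V V m by (metis nth_mem subsetD)
  have x12: "x \<in> path_verts E q1 q2" using ps m by auto
  have x31: "x \<in> path_verts E q3 q1" using qs klen x_def by auto
  have x32: "x \<in> path_verts E q3 q2"
  proof (cases "k = 0")
    case True
    then have "x = q3" using qs qsne x_def by (simp add: hd_conv_nth)
    then show ?thesis using path_verts_ends V by blast
  next
    case False
    let ?L = "take k qs @ drop m ps"
    have d: "set (take k qs) \<inter> set (drop m ps) = {}"
    proof -
      have "set (take k qs) \<inter> set ps = {}" using kmin klen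
        by (auto simp: in_set_conv_nth)
      then show ?thesis using set_drop_subset[of m ps] by blast
    qed
    have w: "walk E ?L"
    proof -
      have "walk E (take k qs)" "walk E (drop m ps)" using qs ps walk_take walk_drop is_path_walk by blast+
      moreover have "last (take k qs) = qs ! (k - 1)" using False klen by (subst last_conv_nth) auto
      moreover have "hd (drop m ps) = x" using m by (simp add: hd_drop_conv_nth)
      moreover have "E (qs ! (k - 1)) (qs ! k)" using qs klen False unfolding is_path_def
        by (metis Suc_pred' bot_nat_0.not_eq_extremum)
      ultimately show ?thesis using walk_append[of "take k qs" "drop m ps" E] False m qsne x_def by simp
    qed
    have Lp: "is_path E ?L" using w d qs ps m unfolding is_path_walk by auto
    have hL: "hd ?L = q3" using qs False qsne by simp
    have lL: "last ?L = q2" using ps m by (simp add: last_drop)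
    have "path_verts E q3 q2 = set ?L" using path_verts_eq[OF Lp] hL lL V by simp
    moreover have "x \<in> set (drop m ps)" using m by (metis Cons_nth_drop_Suc list.set_intros(1))
    ultimately show ?thesis by simp
  qed
  have pair: "x \<in> B" if "a \<in> V" "b \<in> V" "x \<in> path_verts E a b" "y \<in> path_verts E a x" "y \<in> B"
     "z \<in> path_verts E b x" "z \<in> B" for a b y z
  proof -
    have "z \<in> path_verts E x b" using that path_verts_sym by blast
    then have "x \<in> path_verts E y z" using between[OF that(1,2,3,4)] by blast
    then show ?thesis using conv that by blast
  qed
  have xB: "x \<in> B"
  proof (rule ccontr)
    assume "x \<notin> B"
    have t12: "path_verts E q1 q2 \<subseteq> path_verts E q1 x \<union> path_verts E q2 x"
      using path_tri[of q1 x q2] V xV path_verts_sym by blast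
    have t23: "path_verts E q2 q3 \<subseteq> path_verts E q2 x \<union> path_verts E q3 x"
      using path_tri[of q2 x q3] V xV path_verts_sym by blast
    have t31: "path_verts E q3 q1 \<subseteq> path_verts E q3 x \<union> path_verts E q1 x"
      using path_tri[of q3 x q1] V xV path_verts_sym by blast
    have x23: "x \<in> path_verts E q2 q3" using x32 path_verts_sym by blast
    have "(path_verts E q1 x \<inter> B \<noteq> {} \<and> path_verts E q2 x \<inter> B \<noteq> {}) \<or>
          (path_verts E q2 x \<inter> B \<noteq> {} \<and> path_verts E q3 x \<inter> B \<noteq> {}) \<or>
          (path_verts E q3 x \<inter> B \<noteq> {} \<and> path_verts E q1 x \<inter> B \<noteq> {})"
      using t12 t23 t31 m12 m23 m31 by blast
    then show False
    proof (elim disjE conjE)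
      assume "path_verts E q1 x \<inter> B \<noteq> {}" "path_verts E q2 x \<inter> B \<noteq> {}"
      then show False using pair[of q1 q2] V x12 \<open>x \<notin> B\<close> by blast
    next
      assume "path_verts E q2 x \<inter> B \<noteq> {}" "path_verts E q3 x \<inter> B \<noteq> {}"
      then show False using pair[of q2 q3] V x23 \<open>x \<notin> B\<close> by blast
    next
      assume "path_verts E q3 x \<inter> B \<noteq> {}" "path_verts E q1 x \<inter> B \<noteq> {}"
      then show False using pair[of q3 q1] V x31 \<open>x \<notin> B\<close> by blast
    qed
  qed
  have xq: "x \<noteq> q1" "x \<noteq> q2" "x \<noteq> q3" using xB nB by auto
  have m0: "0 < m" using m xq ps psne by (metis hd_conv_nth gr0I)
  have m1: "m + 1 < length ps" using m xq ps psne
    by (metis Suc_eq_plus1 Suc_lessI diff_Suc_1 last_conv_nth)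
  have k0: "0 < k" using xq qs qsne x_def by (metis hd_conv_nth gr0I)
  define u1 where "u1 = ps ! (m - 1)"
  define u2 where "u2 = ps ! (m + 1)"
  define u3 where "u3 = qs ! (k - 1)"
  have e1: "E x u1" using ps m m0 Esym unfolding is_path_def u1_def
    by (metis Suc_pred' less_imp_diff_less)
  have e2: "E x u2" using ps m m1 unfolding is_path_def u2_def by (metis Suc_eq_plus1)
  have e3: "E x u3" using qs klen k0 Esym unfolding is_path_def u3_def x_def
    by (metis Suc_pred' less_imp_diff_less)
  have d12: "u1 \<noteq> u2" using ps m m1 unfolding u1_def u2_def is_path_def
    by (simp add: nth_eq_iff_index_eq)
  have u3n: "u3 \<notin> set ps" using kmin k0 unfolding u3_def by simp
  have u12: "u1 \<in> set ps" "u2 \<in> set ps" using m m1 unfolding u1_def u2_def by auto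
  have u3q: "u3 \<in> set qs" using klen unfolding u3_def by simp
  show ?thesis
    apply (rule bexI[OF _ xB])
    apply (rule exI[of _ u1], rule exI[of _ u2], rule exI[of _ u3])
    using d12 u3n u12 u3q e1 e2 e3 x12 ps qs by auto
qed

end

lemma comp_walk: "C \<in> components E S \<Longrightarrow> walk E ps \<Longrightarrow> ps \<noteq> [] \<Longrightarrow> set ps \<subseteq> S \<Longrightarrow> hd ps \<in> C
  \<Longrightarrow> set ps \<subseteq> C"
proof (induction ps)
  case (Cons x xs)
  show ?case
  proof (cases xs)
    case (Cons y zs)
    have "E x y" "walk E xs" using Cons.prems Cons by auto
    then have "y \<in> C" using Cons.prems Cons unfolding components_def by auto
    then show ?thesis using Cons.IH Cons.prems Cons by auto
  qed (use Cons in auto)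
qed simp

lemma comp_disj: assumes "C \<in> components E S" "D \<in> components E S" "x \<in> C" "x \<in> D"
  shows "C = D"
proof -
  have "C \<subseteq> D" if h: "C \<in> components E S" "D \<in> components E S" "x \<in> C" "x \<in> D" for C D
  proof
    fix y assume "y \<in> C"
    then obtain ps where "is_path E ps" "hd ps = x" "last ps = y" "set ps \<subseteq> C"
      using h unfolding components_def connected_set_def by blast
    moreover have "C \<subseteq> S" using h unfolding components_def by blast
    ultimately show "y \<in> D" using comp_walk[OF h(2)] h
      by (metis is_path_walk last_in_set subset_trans subsetD)
  qed
  then show ?thesis using assms by blast
qed


context
  fixes V :: "'a set" and E :: "'a \<Rightarrow> 'a \<Rightarrow> bool"
  assumes tree: "is_tree V E"
begin

lemma pick:
  assumes AP: "A \<union> P \<subseteq> V"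
    and C: "C \<in> components E (hull_verts E (A \<union> P) - hull_verts E P)"
  shows "\<exists>q\<in>A. q \<in> C"
proof -
  let ?B = "hull_verts E P" and ?H = "hull_verts E (A \<union> P)"
  have PV: "P \<subseteq> V" using AP by blast
  have conv: "path_verts E u v \<subseteq> ?B" if "u \<in> ?B" "v \<in> ?B" for u v
    using hull_convex[OF tree PV that] .
  have PB: "P \<subseteq> ?B" using self_in_hull[OF tree PV] .
  obtain c where c: "c \<in> C" using C unfolding components_def by blast
  have CS: "C \<subseteq> ?H - ?B" using C unfolding components_def by blast
  then have cH: "c \<in> ?H" "c \<notin> ?B" using c by auto
  then obtain a b where ab: "a \<in> A \<union> P" "b \<in> A \<union> P" "c \<in> path_verts E a b"
    unfolding hull_verts_def by blast
  have cV: "c \<in> V" using cH hull_V[OF tree AP] by blast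
  have key: "a' \<in> A \<and> a' \<in> C" if h: "a' \<in> A \<union> P" "b' \<in> A \<union> P" "c \<in> path_verts E a' b'"
    "path_verts E c a' \<inter> ?B = {}" for a' b'
  proof -
    have V2: "a' \<in> V" "b' \<in> V" using h AP by auto
    obtain ps where ps: "is_path E ps" "hd ps = c" "last ps = a'" "path_verts E c a' = set ps"
      using get_path[OF tree cV V2(1)] by metis
    have "path_verts E c a' \<subseteq> path_verts E a' b'"
      using subpath[OF tree V2 h(3)] path_verts_sym[OF tree] by blast
    also have "\<dots> \<subseteq> ?H" using in_hull[OF tree] h by blast
    finally have "set ps \<subseteq> ?H - ?B" using ps h by blast
    then have "set ps \<subseteq> C" using comp_walk[OF C, of ps] ps c by (auto simp: is_path_walk)
    then have "a' \<in> C" using ps by (metis is_path_def last_in_set subsetD)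
    moreover have "a' \<notin> ?B" using h path_verts_ends[OF tree cV V2(1)] by blast
    ultimately show ?thesis using h PB by blast
  qed
  have "path_verts E c a \<inter> ?B = {} \<or> path_verts E c b \<inter> ?B = {}"
  proof (rule ccontr)
    assume "\<not> ?thesis"
    then obtain y z where yz: "y \<in> path_verts E c a" "y \<in> ?B" "z \<in> path_verts E c b" "z \<in> ?B" by blast
    have V2: "a \<in> V" "b \<in> V" using ab AP by auto
    have "y \<in> path_verts E a c" using yz path_verts_sym[OF tree] by blast
    then have "c \<in> path_verts E y z" using between[OF tree V2 ab(3)] yz by blast
    then show False using conv yz cH by blast
  qed
  then show ?thesis
  proof
    assume "path_verts E c a \<inter> ?B = {}"
    then show ?thesis using key[of a b] ab by blast
  next
    assume "path_verts E c b \<inter> ?B = {}"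
    moreover have "c \<in> path_verts E b a" using ab path_verts_sym[OF tree] by blast
    ultimately show ?thesis using key[of b a] ab by blast
  qed
qed

end


lemma st_inv:
  assumes "search_tree E S (Node r ts)" "t \<in> set ts"
  obtains C where "r \<in> S" "C \<in> components E (S - {r})" "search_tree E C t"
proof -
  obtain cs where cs: "r \<in> S" "set cs = components E (S - {r})" "length ts = length cs"
    "\<forall>i < length ts. search_tree E (cs ! i) (ts ! i)"
    using assms(1) by (cases rule: search_tree.cases) auto
  obtain l where l: "l < length ts" "ts ! l = t" using assms(2) by (metis in_set_conv_nth)
  have "cs ! l \<in> components E (S - {r})" using cs l by (metis nth_mem)
  then show ?thesis using that cs l by metis
qed

lemma st_root: "search_tree E S (Node r ts) \<Longrightarrow> r \<in> S"
  by (cases rule: search_tree.cases) auto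

lemma st_set: "root_path T p \<Longrightarrow> search_tree E S T \<Longrightarrow> set p \<subseteq> S"
proof (induction arbitrary: S rule: root_path.induct)
  case (1 r ts)
  then show ?case using st_root by fastforce
next
  case (2 t ts p r)
  obtain C where "r \<in> S" "C \<in> components E (S - {r})" "search_tree E C t"
    using st_inv[OF 2(4) 2(1)] by metis
  moreover have "C \<subseteq> S - {r}" using calculation unfolding components_def by blast
  ultimately show ?case using 2 by auto
qed

lemma st_region: "root_path T p \<Longrightarrow> search_tree E S T \<Longrightarrow> 1 \<le> i \<Longrightarrow> i < length p \<Longrightarrow>
  \<exists>R. R \<subseteq> S \<and> connected_set E R \<and> set (drop i p) \<subseteq> R \<and> set (take i p) \<inter> R = {}"
proof (induction arbitrary: S i rule: root_path.induct)
  case (1 r ts)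
  then show ?case by simp
next
  case (2 t ts p r)
  obtain C where C: "r \<in> S" "C \<in> components E (S - {r})" "search_tree E C t"
    using st_inv[OF 2(4) 2(1)] by metis
  have CS: "C \<subseteq> S - {r}" "connected_set E C" using C unfolding components_def by blast+
  show ?case
  proof (cases "i = 1")
    case True
    then show ?thesis using CS st_set[OF 2(2) C(3)]
      by (intro exI[of _ C]) auto
  next
    case False
    then obtain R where R: "R \<subseteq> C" "connected_set E R" "set (drop (i - 1) p) \<subseteq> R"
      "set (take (i - 1) p) \<inter> R = {}"
    proof -
      have "1 \<le> i - 1" "i - 1 < length p" using False 2(5,6) by auto
      then show ?thesis using 2(3)[OF C(3), of "i - 1"] that by blast
    qed
    have "drop i (r # p) = drop (i - 1) p" "take i (r # p) = r # take (i - 1) p"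
      using 2(5) by (cases i; simp)+
    then show ?thesis using R CS by (intro exI[of _ R]) auto
  qed
qed

lemma rp_take: "root_path T p \<Longrightarrow> 1 \<le> i \<Longrightarrow> root_path T (take i p)"
proof (induction arbitrary: i rule: root_path.induct)
  case (1 r ts)
  then have "take i [r] = [r]" by (cases i) auto
  then show ?case by (simp add: root_path.intros(1))
next
  case (2 t ts p r)
  show ?case
  proof (cases "i = 1")
    case True then show ?thesis by (simp add: root_path.intros(1))
  next
    case False
    then have "take i (r # p) = r # take (i - 1) p" using 2 by (cases i) auto
    then show ?thesis using 2 False by (simp add: root_path.intros(2))
  qed
qed

theorem mainTheorem5:
  fixes V :: "'a set" and E :: "'a \<Rightarrow> 'a \<Rightarrow> bool" and T :: "'a rtree"
    and p :: "'a list" and i :: nat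
  assumes "is_tree V E"
    and "search_tree E V T"
    and "steiner_closed_tree E T"
    and "root_path T p"
    and "1 \<le> i" and "i < length p"
  shows "card (components E (hull_verts E (set p) - hull_verts E (set (drop i p)))) \<le> 2"
proof (rule ccontr)
  note tree = assms(1)
  let ?A = "set (take i p)" and ?P = "set (drop i p)"
  let ?B = "hull_verts E ?P" and ?H = "hull_verts E (set p)"
  let ?X = "components E (?H - ?B)"
  assume "\<not> ?thesis"
  then have c3: "Suc 2 \<le> card ?X" by simp
  have pAP: "set p = ?A \<union> ?P" by (metis append_take_drop_id set_append)
  have pV: "set p \<subseteq> V" using st_set[OF assms(4,2)] .
  have APV: "?A \<union> ?P \<subseteq> V" using pV pAP by simp
  have PV: "?P \<subseteq> V" and AV: "?A \<subseteq> V" using APV by auto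
  have HV: "?H \<subseteq> V" using hull_V[OF tree pV] .
  obtain R where R: "R \<subseteq> V" "connected_set E R" "?P \<subseteq> R" "?A \<inter> R = {}"
    using st_region[OF assms(4,2,5,6)] by blast
  have BR: "?B \<subseteq> R" unfolding hull_verts_def using connected_convex[OF tree R(1,2)] R(3) by blast
  have AB: "?A \<inter> ?B = {}" using BR R(4) by blast
  have sc: "steiner_closed E ?A"
    using assms(3) rp_take[OF assms(4,5)] unfolding steiner_closed_tree_def by blast
  have conv: "\<And>u v. u \<in> ?B \<Longrightarrow> v \<in> ?B \<Longrightarrow> path_verts E u v \<subseteq> ?B"
    using hull_convex[OF tree PV] by blast
  obtain C1 X1 where X1: "?X = insert C1 X1" "C1 \<notin> X1" "2 \<le> card X1" "finite X1"
    using c3 card_le_Suc_iff by metis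
  obtain C2 X2 where X2: "X1 = insert C2 X2" "C2 \<notin> X2" "1 \<le> card X2" "finite X2"
    using X1 card_le_Suc_iff[of 1 X1] by auto
  obtain C3 where C3: "C3 \<in> X2" using X2 by (metis card.empty ex_in_conv not_one_le_zero)
  have Cs: "C1 \<in> ?X" "C2 \<in> ?X" "C3 \<in> ?X" using X1 X2 C3 by auto
  have Cd: "C1 \<noteq> C2" "C1 \<noteq> C3" "C2 \<noteq> C3" using X1 X2 C3 by auto
  have pk: "\<exists>q\<in>?A. q \<in> C" if "C \<in> ?X" for C
    using pick[OF tree APV] that pAP by simp
  obtain q1 q2 q3 where q: "q1 \<in> ?A" "q1 \<in> C1" "q2 \<in> ?A" "q2 \<in> C2" "q3 \<in> ?A" "q3 \<in> C3"
    using pk Cs by metis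
  have CHB: "C \<subseteq> ?H - ?B" if "C \<in> ?X" for C using that unfolding components_def by blast
  have qnB: "q1 \<notin> ?B" "q2 \<notin> ?B" "q3 \<notin> ?B" using q CHB Cs by blast+
  have qV: "q1 \<in> V" "q2 \<in> V" "q3 \<in> V" using q AV by blast+
  have meet: "path_verts E a b \<inter> ?B \<noteq> {}" if "a \<in> ?A" "b \<in> ?A" "C \<in> ?X" "D \<in> ?X"
    "a \<in> C" "b \<in> D" "C \<noteq> D" for a b C D
  proof
    assume e: "path_verts E a b \<inter> ?B = {}"
    have V2: "a \<in> V" "b \<in> V" using that AV by blast+
    obtain ps where ps: "is_path E ps" "hd ps = a" "last ps = b" "path_verts E a b = set ps"
      using get_path[OF tree V2] by metis
    have "path_verts E a b \<subseteq> ?H" using in_hull[OF tree] that pAP by blast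
    then have "set ps \<subseteq> ?H - ?B" using e ps by blast
    then have "set ps \<subseteq> C" using comp_walk[OF that(3), of ps] ps that by (auto simp: is_path_walk)
    then have "b \<in> C" using ps by (metis is_path_def last_in_set subsetD)
    then show False using comp_disj[OF that(3,4)] that by blast
  qed
  have m12: "path_verts E q1 q2 \<inter> ?B \<noteq> {}" using meet[of q1 q2 C1 C2] q Cs Cd by blast
  have m23: "path_verts E q2 q3 \<inter> ?B \<noteq> {}" using meet[of q2 q3 C2 C3] q Cs Cd by blast
  have m31: "path_verts E q3 q1 \<inter> ?B \<noteq> {}" using meet[of q3 q1 C3 C1] q Cs Cd by blast
  obtain x u1 u2 u3 where xu: "x \<in> ?B" "u1 \<noteq> u2" "u1 \<noteq> u3" "u2 \<noteq> u3" "E x u1" "E x u2" "E x u3"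
    "x \<in> path_verts E q1 q2" "{u1, u2, u3} \<subseteq> path_verts E q1 q2 \<union> path_verts E q3 q1"
    using median[OF tree qV qnB conv m12 m23 m31] by blast
  have hA: "path_verts E q1 q2 \<union> path_verts E q3 q1 \<subseteq> hull_verts E ?A"
    using in_hull[OF tree] q by blast
  have xA: "x \<in> hull_verts E ?A - ?A" using xu hA AB by blast
  let ?N = "{u \<in> hull_verts E ?A. E x u}"
  have "card ?N = 2" using sc xA unfolding steiner_closed_def by blast
  moreover have "finite ?N"
  proof (rule finite_subset[OF _ finV[OF tree]])
    show "?N \<subseteq> V" using hull_V[OF tree AV] by blast
  qed
  moreover have "{u1, u2, u3} \<subseteq> ?N" using xu hA by blast
  ultimately have "card {u1, u2, u3} \<le> 2" by (metis card_mono)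
  then show False using xu by simp
qed

end
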